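(* Let $\nu_0\approx 19.6203$ be the positive root of the equation $\sqrt{\pi}\,\Gamma(\nu+3/2) = 8\,\Gamma(\nu+1)$, and let $\nu\ge\nu_0$. Let $$\mathcal{B}_{\nu}(z)= \sum_{n=0}^\infty \frac{ \Gamma(\nu+1)\,\Gamma\!\left(\frac{n+1}{2}\right)}{\sqrt{\pi}\, n!\, \Gamma\!\left(\frac{n}{2}+\nu+1\right)}\, z^n ,\qquad z\in\mathbb{D}=\{z\in\mathbb{C}:|z|<1\}.$$ Then the function $f(z)=z\mathcal{B}_\nu(z)$ is close-to-convex with respect to the starlike function $g(z)=z/(1-z^2)$.
   Context: $\mathcal{B}_\nu$ is the Bessel–Struve kernel function; $f(z)=z\mathcal{B}_\nu(z)$ satisfies $f(0)=0$, $f'(0)=1$. Given a starlike function $g$ (univalent in $\mathbb{D}$ with $g(\mathbb{D})$ starlike with respect to $0$), an analytic $f$ on $\mathbb{D}$ with $f(0)=0$, $f'(0)=1$ is close-to-convex with respect to $g$ if there exists a real $\beta$ such that $\operatorname{Re}\left(e^{i\beta}\, z f'(z)/g(z)\right)>0$ for all $z\in\mathbb{D}$. *)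

theory Defs
  imports "HOL-Complex_Analysis.Complex_Analysis"
begin

abbreviation unit_disc :: "complex set" where
  "unit_disc \<equiv> ball 0 1"

definition bs_coeff :: "real \<Rightarrow> nat \<Rightarrow> real" where
  "bs_coeff \<nu> n = Gamma (\<nu> + 1) * Gamma ((real n + 1) / 2)
      / (sqrt pi * fact n * Gamma (real n / 2 + \<nu> + 1))"

definition bessel_struve_kernel :: "real \<Rightarrow> complex \<Rightarrow> complex" where
  "bessel_struve_kernel \<nu> z = (\<Sum>n. complex_of_real (bs_coeff \<nu> n) * z ^ n)"

definition starlike_fun :: "(complex \<Rightarrow> complex) \<Rightarrow> bool" where
  "starlike_fun g \<longleftrightarrow>
     g holomorphic_on unit_disc \<and> inj_on g unit_disc \<and> g 0 = 0 \<and>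
     (\<forall>w \<in> g ` unit_disc. closed_segment 0 w \<subseteq> g ` unit_disc)"

text \<open>The quotient z f'(z)/g(z), extended to z = 0 by its limit f'(0)/g'(0).\<close>
definition ctc_quotient :: "(complex \<Rightarrow> complex) \<Rightarrow> (complex \<Rightarrow> complex) \<Rightarrow> complex \<Rightarrow> complex" where
  "ctc_quotient f g z = (if z = 0 then deriv f 0 / deriv g 0 else z * deriv f z / g z)"

definition close_to_convex_wrt :: "(complex \<Rightarrow> complex) \<Rightarrow> (complex \<Rightarrow> complex) \<Rightarrow> bool" where
  "close_to_convex_wrt f g \<longleftrightarrow>
     starlike_fun g \<and> f holomorphic_on unit_disc \<and> f 0 = 0 \<and> deriv f 0 = 1 \<and>
     (\<exists>\<beta>::real. \<forall>z \<in> unit_disc. Re (cis \<beta> * ctc_quotient f g z) > 0)"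

end

theory Submission
  imports Defs
begin


lemma abs_sin_mult: "\<bar>sin (real n * x)\<bar> \<le> real n * \<bar>sin x\<bar>"
proof (induction n)
  case 0 then show ?case by simp
next
  case (Suc n)
  have "sin (real (Suc n) * x) = sin (real n * x) * cos x + cos (real n * x) * sin x"
    by (simp add: distrib_right sin_add)
  then have "\<bar>sin (real (Suc n) * x)\<bar> \<le> \<bar>sin (real n * x)\<bar> * \<bar>cos x\<bar> + \<bar>cos (real n * x)\<bar> * \<bar>sin x\<bar>"
    by (simp add: abs_mult[symmetric] abs_triangle_ineq[THEN order_trans])
  also have "\<dots> \<le> \<bar>sin (real n * x)\<bar> + \<bar>sin x\<bar>"
    by (intro add_mono) (auto intro: mult_left_le mult_left_le_one_le)
  also have "\<dots> \<le> real (Suc n) * \<bar>sin x\<bar>" using Suc by (simp add: algebra_simps)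
  finally show ?case .
qed

lemma trig_ineq:
  fixes r t :: real and n :: nat
  assumes r: "0 \<le> r" "r \<le> 1"
  shows "r^n * cos (real n * t) - r^(n+2) * cos ((real n + 2) * t) \<ge> - (real n + 1) * (1 - r^2 * cos (2*t))"
proof -
  define C where "C = cos (real n * t)"
  define S where "S = sin ((real n + 1) * t)"
  define s where "s = sin t"
  have e1: "cos ((real n + 2) * t) = C - 2 * S * s"
  proof -
    have "cos ((real n + 2) * t) = cos ((real n + 1) * t + t)" by (simp add: algebra_simps)
    moreover have "C = cos ((real n + 1) * t - t)" unfolding C_def by (simp add: algebra_simps)
    ultimately show ?thesis unfolding S_def s_def by (simp add: cos_add cos_diff)
  qed
  have e2: "cos (2*t) = 1 - 2 * s^2" unfolding s_def by (simp add: cos_double_sin)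
  have hS: "\<bar>S * s\<bar> \<le> (real n + 1) * s^2"
  proof -
    have "\<bar>S\<bar> \<le> (real n + 1) * \<bar>s\<bar>" using abs_sin_mult[of "Suc n" t] unfolding S_def s_def by (simp add: add_ac)
    then have "\<bar>S\<bar> * \<bar>s\<bar> \<le> (real n + 1) * \<bar>s\<bar> * \<bar>s\<bar>" by (simp add: mult_right_mono)
    then show ?thesis by (simp add: abs_mult power2_eq_square mult.assoc)
  qed
  have hC: "\<bar>C\<bar> \<le> 1" unfolding C_def by simp
  have rn: "r^n \<le> 1" "0 \<le> r^n" using r by (auto intro: power_le_one)
  have r2: "r^2 \<le> 1" "0 \<le> r^2" "1 - r^2 \<ge> 0" using r by (auto intro: power_le_one)
  have lhs: "r^n * cos (real n * t) - r^(n+2) * cos ((real n + 2) * t) = r^n * ((1 - r^2) * C + 2 * r^2 * (S * s))"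
    unfolding e1 C_def by (simp add: power_add algebra_simps power2_eq_square)
  have "(1 - r^2) * C \<ge> - (1 - r^2)" using mult_left_mono[of "-1" C "1-r^2"] hC r2 by auto
  moreover have "S * s \<ge> - ((real n + 1) * s^2)" using hS by linarith
  then have "2 * r^2 * (S * s) \<ge> - (2 * r^2 * ((real n + 1) * s^2))"
    using mult_left_mono[of "- ((real n + 1) * s^2)" "S * s" "2 * r^2"] r2 by simp
  ultimately have A: "(1 - r^2) * C + 2 * r^2 * (S * s) \<ge> - ((1 - r^2) + 2 * r^2 * ((real n + 1) * s^2))" by linarith
  define X where "X = (1 - r^2) * C + 2 * r^2 * (S * s)"
  define B where "B = (1 - r^2) + 2 * r^2 * ((real n + 1) * s^2)"
  have B0: "B \<ge> 0" unfolding B_def using r2 by simp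
  have "r^n * X \<ge> r^n * (-B)" using mult_left_mono[of "-B" X "r^n"] A rn unfolding X_def B_def by simp
  moreover have "r^n * B \<le> B" using mult_left_le_one_le[OF B0 rn(2) rn(1)] .
  ultimately have "r^n * X \<ge> - B" by (simp add: minus_mult_right[symmetric])
  then have "r^n * ((1 - r^2) * C + 2 * r^2 * (S * s)) \<ge> - ((1 - r^2) + 2 * r^2 * ((real n + 1) * s^2))"
    unfolding X_def B_def .
  moreover have "(1 - r^2) + 2 * r^2 * ((real n + 1) * s^2) \<le> (real n + 1) * (1 - r^2 * cos (2*t))"
  proof -
    have "(real n + 1) * (1 - r^2 * cos (2*t)) = (real n + 1) * (1 - r^2) + 2 * r^2 * ((real n + 1) * s^2)"
      unfolding e2 by (simp add: algebra_simps)
    moreover have "(1 - r^2) \<le> (real n + 1) * (1 - r^2)" using r2 mult_left_le[of "r^2" "real n"] by (simp add: algebra_simps)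
    ultimately show ?thesis by linarith
  qed
  ultimately show ?thesis unfolding lhs by linarith
qed

lemma re_ineq:
  fixes z :: complex assumes z: "cmod z \<le> 1"
  shows "Re (z^n * (1 - z^2)) \<ge> - (real n + 1) * Re (1 - z^2)"
proof -
  define r where "r = cmod z"
  define t where "t = Arg z"
  have zr: "z = rcis r t" unfolding r_def t_def by (simp add: rcis_cmod_Arg)
  have a: "Re (z^n * (1 - z^2)) = r^n * cos (real n * t) - r^(n+2) * cos ((real n + 2) * t)"
  proof -
    have e: "z^n * (1 - z^2) = z^n - z^(n+2)" by (simp add: algebra_simps power_add power2_eq_square)
    have hk: "\<And>k. Re (z^k) = r^k * cos (real k * t)" unfolding zr by (simp add: DeMoivre2)
    have "Re (z^n * (1 - z^2)) = Re (z^n) - Re (z^(n+2))" unfolding e by (simp only: minus_complex.sel)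
    also have "\<dots> = r^n * cos (real n * t) - r^(n+2) * cos ((real n + 2) * t)" by (simp only: hk of_nat_add of_nat_numeral)
    finally show ?thesis .
  qed
  have b: "Re (1 - z^2) = 1 - r^2 * cos (2*t)"
    unfolding zr by (simp add: DeMoivre2)
  show ?thesis unfolding a b by (rule trig_ineq) (use z r_def in auto)
qed



lemma key_re:
  fixes z :: complex
  assumes z: "cmod z < 1" "z \<noteq> 0" and re: "Re (1/z - z) = 0"
  shows "cmod (1/z - z) > 2"
proof -
  obtain a b where ab: "z = Complex a b" by (cases z)
  define \<rho> where "\<rho> = a^2 + b^2"
  have "sqrt \<rho> < 1" using z(1) by (simp add: ab cmod_def \<rho>_def)
  then have \<rho>1: "\<rho> < 1" by simp
  have "\<rho> \<noteq> 0" using z(2) unfolding ab \<rho>_def by (simp add: complex_eq_iff)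
  moreover have "\<rho> \<ge> 0" unfolding \<rho>_def by simp
  ultimately have \<rho>0: "\<rho> > 0" by simp
  have "Re (1/z - z) = a/\<rho> - a" unfolding ab \<rho>_def by (simp add: Re_divide power2_eq_square)
  then have "a * (1/\<rho> - 1) = 0" using re by (simp add: algebra_simps)
  moreover have "1/\<rho> - 1 > 0" using \<rho>0 \<rho>1 by simp
  ultimately have a0: "a = 0" using \<rho>1 by auto
  then have b: "b^2 < 1" "b \<noteq> 0" using \<rho>0 \<rho>1 unfolding \<rho>_def by auto
  have "1/z - z = Complex 0 (-(1/b + b))" unfolding ab a0 using b
    by (simp add: complex_eq_iff Re_divide Im_divide power2_eq_square)
  then have "cmod (1/z - z) = \<bar>1/b + b\<bar>" by (simp add: cmod_def)
  also have "\<dots> > 2"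
  proof -
    define x where "x = \<bar>b\<bar>"
    have x: "x < 1" "x > 0" using b unfolding x_def by (auto simp: abs_square_less_1)
    have "(1 - x)^2 > 0" using x by simp
    then have "1 + x*x > 2 * x" by (simp add: power2_eq_square algebra_simps)
    then have "(1 + x*x)/x > 2" using x by (simp add: field_simps)
    then have "1/x + x > 2" using x by (simp add: field_simps)
    moreover have "\<bar>1/b + b\<bar> = 1/x + x"
    proof (cases "b > 0")
      case True
      then have "1/b + b > 0" by (simp add: add_pos_pos)
      then show ?thesis using True x_def by simp
    next
      case False
      then have bn: "b < 0" using b by simp
      then have "1/b + b < 0" by (simp add: add_neg_neg)
      then have "\<bar>1/b + b\<bar> = 1/(-b) + (-b)" by simp
      then show ?thesis using bn x_def by simp
    qed
    ultimately show ?thesis by simp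
  qed
  finally show ?thesis .
qed

lemma one_minus_sq_nz: "cmod (z::complex) < 1 \<Longrightarrow> 1 - z^2 \<noteq> 0"
proof
  assume "cmod z < 1" "1 - z^2 = 0"
  then have "cmod (z^2) = 1" by (metis norm_one right_minus_eq)
  then have "cmod z ^ 2 = 1 ^ 2" by (simp add: norm_power)
  then have "cmod z = 1" using power2_eq_iff_nonneg[of "cmod z" 1] by simp
  with \<open>cmod z < 1\<close> show False by simp
qed

lemma seg_point:
  fixes z :: complex and t :: real
  assumes z: "cmod z < 1" and t: "0 < t" "t \<le> 1"
  shows "\<exists>u. cmod u < 1 \<and> u/(1-u^2) = of_real t * (z/(1-z^2))"
proof (cases "z = 0")
  case True then show ?thesis by (intro exI[of _ 0]) simp
next
  case False
  have nz: "1 - z^2 \<noteq> 0" using one_minus_sq_nz[OF z] .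
  define p where "p = (1-z^2)/(of_real t * z)"
  have p0: "p \<noteq> 0" unfolding p_def using nz False t by simp
  define d where "d = csqrt (p^2+4)"
  have d2: "d^2 = p^2 + 4" unfolding d_def by simp
  define u1 where "u1 = (-p+d)/2"
  define u2 where "u2 = (-p-d)/2"
  have "u1^2 + p*u1 - 1 = (d^2 - (p^2+4))/4" unfolding u1_def by (simp add: field_simps power2_eq_square)
  then have r1: "u1^2 + p*u1 - 1 = 0" unfolding d2 by simp
  have "u2^2 + p*u2 - 1 = (d^2 - (p^2+4))/4" unfolding u2_def by (simp add: field_simps power2_eq_square)
  then have r2: "u2^2 + p*u2 - 1 = 0" unfolding d2 by simp
  have "u1 * u2 = -1 - (d^2 - (p^2+4))/4" unfolding u1_def u2_def by (simp add: field_simps power2_eq_square)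
  then have prod: "u1 * u2 = -1" unfolding d2 by simp
  have good: "u/(1-u^2) = of_real t * (z/(1-z^2))" if "u^2 + p*u - 1 = 0" for u
  proof -
    have u0: "u \<noteq> 0" using that by auto
    have "1 - u^2 = p*u" using that by (simp add: algebra_simps)
    then have "u/(1-u^2) = 1/p" using u0 by simp
    also have "\<dots> = of_real t * (z/(1-z^2))" unfolding p_def using nz False t by (simp add: field_simps)
    finally show ?thesis .
  qed
  show ?thesis
  proof (cases "cmod u1 < 1")
    case True then show ?thesis using good[OF r1] by blast
  next
    case c1: False
    show ?thesis
    proof (cases "cmod u2 < 1")
      case True then show ?thesis using good[OF r2] by blast
    next
      case c2: False
      have "cmod (u1 * u2) = 1" using prod by simp
      then have "cmod u1 * cmod u2 = 1" by (simp add: norm_mult)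
      moreover have "1 * cmod u2 \<le> cmod u1 * cmod u2" by (rule mult_right_mono) (use c1 in auto)
      ultimately have "cmod u2 = 1" using c2 by simp
      then have m1: "cmod u1 = 1" using \<open>cmod u1 * cmod u2 = 1\<close> by simp
      have u10: "u1 \<noteq> 0" using m1 by auto
      have "u1 * cnj u1 = complex_of_real ((cmod u1)^2)" by (rule complex_norm_square[symmetric])
      then have "u1 * cnj u1 = 1" using m1 by simp
      then have inv: "1/u1 = cnj u1" using u10 by (simp add: field_simps)
      have "p*u1 = 1 - u1^2" using r1 by (simp add: algebra_simps)
      then have "p = (1 - u1^2)/u1" using u10 by (simp add: eq_divide_eq)
      also have "\<dots> = 1/u1 - u1" using u10 by (simp add: field_simps power2_eq_square)
      finally have pe: "p = cnj u1 - u1" using inv by simp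
      have rep: "Re p = 0" unfolding pe by simp
      have np: "cmod p \<le> 2" unfolding pe using norm_triangle_ineq4[of "cnj u1" u1] m1 by simp
      have w: "1/z - z = of_real t * p" unfolding p_def using False t by (simp add: field_simps power2_eq_square)
      have "Re (1/z - z) = 0" unfolding w using rep by simp
      from key_re[OF z False this] have "cmod (1/z - z) > 2" .
      moreover have "cmod (1/z - z) \<le> 2"
      proof -
        have "t * cmod p \<le> 1 * 2" using np t by (intro mult_mono) auto
        then show ?thesis using t w by (simp add: norm_mult)
      qed
      ultimately show ?thesis by simp
    qed
  qed
qed

lemma starlike_g: "starlike_fun (\<lambda>z. z / (1 - z\<^sup>2))"
  unfolding starlike_fun_def
proof (intro conjI ballI)
  show "(\<lambda>z. z / (1 - z\<^sup>2)) holomorphic_on unit_disc"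
    by (intro holomorphic_intros) (use one_minus_sq_nz in auto)
  show "inj_on (\<lambda>z. z / (1 - z\<^sup>2)) unit_disc"
  proof (rule inj_onI)
    fix z w :: complex assume z: "z \<in> unit_disc" and w: "w \<in> unit_disc"
      and e: "z / (1 - z\<^sup>2) = w / (1 - w\<^sup>2)"
    have nz: "1 - z^2 \<noteq> 0" "1 - w^2 \<noteq> 0" using z w one_minus_sq_nz by auto
    from e nz have "z * (1 - w^2) = w * (1 - z^2)" by (simp add: field_simps)
    then have "(z - w) * (1 + z*w) = 0" by (simp add: algebra_simps power2_eq_square)
    moreover have "1 + z*w \<noteq> 0"
    proof
      assume "1 + z*w = 0"
      then have "cmod (z*w) = 1" by (metis add.inverse_unique norm_minus_cancel norm_one)
      moreover have "cmod (z*w) < 1"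
      proof -
        have "cmod z * cmod w \<le> cmod z * 1" using w by (intro mult_left_mono) auto
        then show ?thesis using z by (simp add: norm_mult)
      qed
      ultimately show False by simp
    qed
    ultimately show "z = w" by simp
  qed
  show "0 / (1 - 0\<^sup>2) = (0::complex)" by simp
  fix w assume "w \<in> (\<lambda>z. z / (1 - z\<^sup>2)) ` unit_disc"
  then obtain z where z: "cmod z < 1" and wz: "w = z / (1 - z\<^sup>2)" by auto
  show "closed_segment 0 w \<subseteq> (\<lambda>z. z / (1 - z\<^sup>2)) ` unit_disc"
  proof
    fix x assume "x \<in> closed_segment 0 w"
    then obtain t where t: "0 \<le> t" "t \<le> 1" and x: "x = t *\<^sub>R w"
      unfolding closed_segment_def by auto
    show "x \<in> (\<lambda>z. z / (1 - z\<^sup>2)) ` unit_disc"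
    proof (cases "t = 0")
      case True then show ?thesis using x by (intro image_eqI[of _ _ 0]) auto
    next
      case False
      then obtain u where "cmod u < 1" "u/(1-u^2) = of_real t * (z/(1-z^2))"
        using seg_point[OF z _ t(2)] t(1) by force
      then show ?thesis using x wz by (intro image_eqI[of _ _ u]) (auto simp: scaleR_conv_of_real)
    qed
  qed
qed



lemma gp: "(x::real) > 0 \<Longrightarrow> Gamma (x+1) = x * Gamma x"
  by (rule Gamma_plus1) (auto dest: nonpos_Ints_nonpos)

lemma bs_rec:
  assumes nu: "\<nu> \<ge> 0"
  shows "bs_coeff \<nu> (n+2) = bs_coeff \<nu> n / ((real n+2)*(real n+2+2*\<nu>))"
proof -
  have g1: "Gamma ((real (n+2) + 1) / 2) = ((real n+1)/2) * Gamma ((real n+1)/2)"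
    using gp[of "(real n+1)/2"] by (simp add: field_simps)
  have g2: "Gamma (real (n+2) / 2 + \<nu> + 1) = (real n/2+\<nu>+1) * Gamma (real n/2+\<nu>+1)"
    using gp[of "real n/2+\<nu>+1"] nu by (simp add: field_simps)
  have f: "fact (n+2) = (real n+2)*(real n+1)*fact n"
    by (simp add: algebra_simps)
  have pos: "Gamma (real n/2+\<nu>+1) > 0" "Gamma ((real n+1)/2) > 0" "Gamma (\<nu>+1) > 0"
    using nu by (auto intro!: Gamma_real_pos)
  define A where "A = Gamma (\<nu>+1)"
  define G where "G = Gamma ((real n+1)/2)"
  define H where "H = Gamma (real n/2+\<nu>+1)"
  have "bs_coeff \<nu> (n+2) = A * (((real n+1)/2) * G) / (sqrt pi * ((real n+2)*(real n+1)*fact n) * ((real n/2+\<nu>+1) * H))"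
    unfolding bs_coeff_def g1 g2 f A_def G_def H_def by simp
  also have "\<dots> = A * G / (sqrt pi * fact n * H) / ((real n+2)*(real n+2+2*\<nu>))"
  proof -
    have "G > 0" "H > 0" using pos unfolding G_def H_def by auto
    moreover have "sqrt pi > 0" "(fact n::real) > 0" by auto
    ultimately have nz: "sqrt pi * fact n * H \<noteq> 0" by simp
    have k: "((real n+1)/2) / (((real n+2)*(real n+1)) * (real n/2+\<nu>+1)) = 1 / ((real n+2)*(real n+2+2*\<nu>))"
    proof -
      have p: "real n + 1 > 0" "real n/2+\<nu>+1 > 0" "real n + 2 + 2*\<nu> > 0" "real n + 2 > 0" using nu by auto
      have "((real n+1)/2) / (((real n+2)*(real n+1)) * (real n/2+\<nu>+1)) = 1 / ((real n+2)*(2*(real n/2+\<nu>+1)))"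
        using p by (simp add: divide_simps) (simp add: algebra_simps)
      also have "2*(real n/2+\<nu>+1) = real n + 2 + 2*\<nu>" by simp
      finally show ?thesis .
    qed
    have "A * (((real n+1)/2) * G) / (sqrt pi * ((real n+2)*(real n+1)*fact n) * ((real n/2+\<nu>+1) * H))
       = (A * G / (sqrt pi * fact n * H)) * (((real n+1)/2) / (((real n+2)*(real n+1)) * (real n/2+\<nu>+1)))"
      by (simp add: ac_simps)
    also have "\<dots> = A * G / (sqrt pi * fact n * H) / ((real n+2)*(real n+2+2*\<nu>))"
      unfolding k by simp
    finally show ?thesis .
  qed
  also have "\<dots> = bs_coeff \<nu> n / ((real n+2)*(real n+2+2*\<nu>))"
    unfolding bs_coeff_def A_def G_def H_def by simp
  finally show ?thesis .
qed

lemma bs0: "\<nu> \<ge> 0 \<Longrightarrow> bs_coeff \<nu> 0 = 1"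
proof -
  assume "\<nu> \<ge> 0"
  then have "Gamma (\<nu>+1) > 0" by simp
  then show ?thesis unfolding bs_coeff_def by (simp add: Gamma_one_half_real)
qed

lemma bs1: "bs_coeff \<nu> 1 = Gamma (\<nu>+1) / (sqrt pi * Gamma (\<nu> + 3/2))"
  unfolding bs_coeff_def by (simp add: add_ac)

lemma bs_pos: "\<nu> \<ge> 0 \<Longrightarrow> bs_coeff \<nu> n > 0"
  unfolding bs_coeff_def by (auto intro!: divide_pos_pos mult_pos_pos Gamma_real_pos)


lemma gamma_half_sq:
  fixes x :: real assumes x: "x > 0"
  shows "Gamma (x + 1/2) ^ 2 \<le> x * Gamma x ^ 2"
proof -
  have "(ln \<circ> Gamma) ((1 - 1/2) *\<^sub>R x + (1/2) *\<^sub>R (x+1)) \<le> (1 - 1/2) * (ln \<circ> Gamma) x + (1/2) * (ln \<circ> Gamma) (x+1)"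
    by (rule convex_onD[OF log_convex_Gamma_real]) (use x in auto)
  moreover have "(1 - 1/2) *\<^sub>R x + (1/2) *\<^sub>R (x+1) = x + 1/2" by (simp add: field_simps)
  ultimately have h: "2 * ln (Gamma (x+1/2)) \<le> ln (Gamma x) + ln (Gamma (x+1))" by simp
  have gp: "Gamma (x+1) = x * Gamma x" using gp[OF x] .
  have p1: "Gamma x > 0" "Gamma (x+1/2) > 0" using x by auto
  have e1: "ln (Gamma (x + 1/2) ^ 2) = 2 * ln (Gamma (x+1/2))" using p1 by (simp add: ln_realpow)
  have "Gamma x ^ 2 > 0" using p1 by simp
  then have "ln (x * Gamma x ^ 2) = ln x + ln (Gamma x ^ 2)" by (rule ln_mult_pos[OF x])
  then have e2: "ln (x * Gamma x ^ 2) = ln x + 2 * ln (Gamma x)" using p1 by (simp add: ln_realpow)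
  have e3: "ln (Gamma (x+1)) = ln x + ln (Gamma x)" unfolding gp by (rule ln_mult_pos[OF x p1(1)])
  have "ln (Gamma (x + 1/2) ^ 2) \<le> ln (x * Gamma x ^ 2)"
    unfolding e1 e2 using h e3 by simp
  then show ?thesis using p1 x by (simp del: ln_mult)
qed

lemma nu_lower:
  assumes "\<nu>0 > 0" "sqrt pi * Gamma (\<nu>0 + 3/2) = 8 * Gamma (\<nu>0 + 1)"
  shows "\<nu>0 \<ge> 19"
proof -
  define A where "A = Gamma (\<nu>0 + 1)"
  define B where "B = Gamma (\<nu>0 + 3/2)"
  have A0: "A > 0" unfolding A_def using assms(1) by simp
  have h: "B^2 \<le> (\<nu>0+1) * A^2" using gamma_half_sq[of "\<nu>0+1"] assms(1)
    unfolding A_def B_def by (simp add: add.assoc)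
  have "(sqrt pi * B)^2 = (8*A)^2" using assms(2) unfolding A_def B_def by simp
  then have "pi * B^2 = 64 * A^2" by (simp add: power_mult_distrib)
  then have "64 * A^2 \<le> pi * ((\<nu>0+1) * A^2)" using h by (metis mult_left_mono pi_ge_zero)
  then have "64 \<le> pi * (\<nu>0+1)" using A0 by (simp add: mult.assoc[symmetric])
  moreover have "pi \<le> 3.2" using pi_approx by simp
  ultimately have "64 \<le> 3.2 * (\<nu>0+1)" using assms(1)
    by (smt (verit) mult_right_mono)
  then show ?thesis by simp
qed

lemma b1_bound:
  assumes "\<nu> \<ge> 19" shows "bs_coeff \<nu> 1 \<le> 3/20"
proof -
  define A where "A = Gamma (\<nu> + 1)"
  define G where "G = Gamma (\<nu> + 1/2)"
  have A0: "A > 0" "G > 0" unfolding A_def G_def using assms by auto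
  have h: "A^2 \<le> (\<nu>+1/2) * G^2" using gamma_half_sq[of "\<nu>+1/2"] assms
    unfolding A_def G_def by (simp add: add.assoc)
  have g32: "Gamma (\<nu> + 3/2) = (\<nu>+1/2) * G" unfolding G_def using gp[of "\<nu>+1/2"] assms
    by (simp add: add.assoc)
  have b1: "bs_coeff \<nu> 1 = A / (sqrt pi * ((\<nu>+1/2) * G))" unfolding bs1 g32 A_def ..
  have "(20*A)^2 \<le> (3 * sqrt pi * ((\<nu>+1/2) * G))^2"
  proof -
    have "(20*A)^2 = 400 * A^2" by (simp add: power_mult_distrib)
    also have "\<dots> \<le> 400 * ((\<nu>+1/2) * G^2)" using h by simp
    also have "\<dots> \<le> (9 * pi * (\<nu>+1/2)) * ((\<nu>+1/2) * G^2)"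
    proof (rule mult_right_mono)
      have "9 * 3 * 19 \<le> 9 * pi * (\<nu>+1/2)" using pi_gt3 assms
        by (intro mult_mono) auto
      then show "400 \<le> 9 * pi * (\<nu>+1/2)" by simp
    qed (use assms in simp)
    also have "\<dots> = (3 * sqrt pi * ((\<nu>+1/2) * G))^2" by (simp add: power_mult_distrib power2_eq_square)
    finally show ?thesis .
  qed
  then have "20*A \<le> 3 * sqrt pi * ((\<nu>+1/2) * G)"
    by (rule power2_le_imp_le) (use A0 assms in simp)
  then show ?thesis unfolding b1 using A0 assms by (simp add: field_simps)
qed

lemma c_bound:
  assumes nu: "\<nu> \<ge> 19" and n: "n \<ge> 1"
  shows "(real n + 1)^2 * bs_coeff \<nu> n \<le> 12/5 * (1/4)^n"
  using n
proof (induction n rule: less_induct)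
  case (less n)
  have b1: "bs_coeff \<nu> 1 \<le> 3/20" using b1_bound nu by simp
  have nu0: "\<nu> \<ge> 0" using nu by simp
  consider "n = 1" | "n = 2" | m where "n = m + 2" "m \<ge> 1" using less.prems
    by (metis add.commute add_2_eq_Suc' le_add1 less_one nat_neq_iff not_less_eq_eq numeral_2_eq_2 plus_1_eq_Suc add_diff_inverse_nat)
  then show ?case
  proof cases
    case 1 then show ?thesis using b1 by simp
  next
    case 2
    have "bs_coeff \<nu> 2 = bs_coeff \<nu> 0 / ((real 0+2)*(real 0+2+2*\<nu>))" using bs_rec[OF nu0, of 0] by (simp only: add_0)
    then have "bs_coeff \<nu> 2 = 1 / (2 * (2 + 2*\<nu>))" using bs0[OF nu0] by simp
    moreover have "1 / (2 * (2 + 2*\<nu>)) \<le> 1/80" using nu by (simp add: field_simps)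
    ultimately have "bs_coeff \<nu> 2 \<le> 1/80" by simp
    then have "9 * bs_coeff \<nu> 2 \<le> 9/80" by simp
    moreover have "(real 2 + 1)^2 = (9::real)" by simp
    ultimately show ?thesis using 2 by (simp add: power2_eq_square)
  next
    case 3
    then obtain m where m: "n = m + 2" "m \<ge> 1" by blast
    have IH: "(real m + 1)^2 * bs_coeff \<nu> m \<le> 12/5 * (1/4)^m" using less.IH m by simp
    have bm: "bs_coeff \<nu> m > 0" using bs_pos nu0 by blast
    have "3 * 41 \<le> (real m+2)*(real m+2+2*\<nu>)" using m nu
      by (intro mult_mono) auto
    then have D: "(real m+2)*(real m+2+2*\<nu>) \<ge> 123" by simp
    have m1: "real m \<ge> 1" using m by simp
    then have "real m * real m \<ge> 1 * 1" by (intro mult_mono) auto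
    then have Q: "(real m + 3)^2 \<le> 4 * (real m + 1)^2" using m1 by (simp add: power2_eq_square algebra_simps)
    have "(real n + 1)^2 * bs_coeff \<nu> n = (real m + 3)^2 * bs_coeff \<nu> m / ((real m+2)*(real m+2+2*\<nu>))"
      unfolding m bs_rec[OF nu0] by (simp add: add_ac)
    also have "\<dots> \<le> (real m + 3)^2 * bs_coeff \<nu> m / 123"
      using D bm by (intro divide_left_mono) auto
    also have "\<dots> \<le> 4 * ((real m + 1)^2 * bs_coeff \<nu> m) / 123"
      using Q bm by (intro divide_right_mono) (auto simp: mult.assoc[symmetric] intro: mult_right_mono)
    also have "\<dots> \<le> 4 * (12/5 * (1/4)^m) / 123" using IH by (intro divide_right_mono mult_left_mono) auto
    also have "\<dots> \<le> 12/5 * (1/4)^n" unfolding m by (simp add: power_add)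
    finally show ?thesis .
  qed
qed



theorem theorem4:
  fixes \<nu>0 \<nu> :: real
  assumes "\<nu>0 > 0"
    and "sqrt pi * Gamma (\<nu>0 + 3/2) = 8 * Gamma (\<nu>0 + 1)"
    and "\<nu> \<ge> \<nu>0"
  shows "close_to_convex_wrt (\<lambda>z. z * bessel_struve_kernel \<nu> z) (\<lambda>z. z / (1 - z\<^sup>2))"
proof -
  define b where "b = bs_coeff \<nu>"
  have nu: "\<nu> \<ge> 19" using nu_lower[OF assms(1,2)] assms(3) by simp
  have nu0: "\<nu> \<ge> 0" using nu by simp
  have bpos: "\<And>n. b n > 0" unfolding b_def using bs_pos[OF nu0] by blast
  have b0: "b 0 = 1" unfolding b_def using bs0[OF nu0] .
  have cb: "\<And>n. n \<ge> 1 \<Longrightarrow> (real n + 1)^2 * b n \<le> 12/5 * (1/4)^n"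
    unfolding b_def using c_bound[OF nu] by blast
  have cb2: "(real n + 1) * b n \<le> 3 * (1/4)^n" for n
  proof (cases "n = 0")
    case True then show ?thesis using b0 by simp
  next
    case False
    have "(real n + 1) * b n \<le> (real n + 1)^2 * b n"
      using bpos[of n] by (intro mult_right_mono) (auto simp: power2_eq_square)
    also have "\<dots> \<le> 12/5 * (1/4)^n" using cb False by simp
    also have "\<dots> \<le> 3 * (1/4)^n" by simp
    finally show ?thesis .
  qed
  have bb: "b n \<le> 3 * (1/4)^n" for n
  proof -
    have "b n \<le> (real n + 1) * b n" using bpos[of n] by (simp add: algebra_simps)
    then show ?thesis using cb2[of n] by linarith
  qed
  have summ_b: "summable (\<lambda>n. complex_of_real (b n) * z^n)" if z: "cmod z \<le> 2" for z
  proof (rule summable_comparison_test')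
    show "summable (\<lambda>n. 3 * (1/2::real)^n)" by (intro summable_mult summable_geometric) simp
    fix n :: nat
    have "norm (complex_of_real (b n) * z^n) = b n * cmod z ^ n"
      using bpos[of n] by (simp add: norm_mult norm_power)
    also have "\<dots> \<le> 3 * (1/4)^n * 2^n"
      using bb[of n] z bpos[of n] by (intro mult_mono power_mono) auto
    also have "\<dots> = 3 * ((1/4) * 2)^n" by (simp only: power_mult_distrib mult.assoc)
    also have "\<dots> = 3 * (1/2)^n" by simp
    finally show "norm (complex_of_real (b n) * z^n) \<le> 3 * (1/2)^n" .
  qed
  have summ_c: "summable (\<lambda>n. complex_of_real ((real n + 1) * b n) * z^n)" if z: "cmod z \<le> 1" for z
  proof (rule summable_comparison_test')
    show "summable (\<lambda>n. 3 * (1/4::real)^n)" by (intro summable_mult summable_geometric) simp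
    fix n :: nat
    have p: "(real n + 1) * b n > 0" using bpos[of n] by simp
    have "norm (complex_of_real ((real n + 1) * b n) * z^n) = ((real n + 1) * b n) * cmod z ^ n"
      by (simp only: norm_mult norm_of_real norm_power abs_of_pos[OF p])
    also have "\<dots> \<le> ((real n + 1) * b n) * 1"
      using z p by (intro mult_left_mono power_le_one) auto
    also have "\<dots> \<le> 3 * (1/4)^n" using cb2[of n] by simp
    finally show "norm (complex_of_real ((real n + 1) * b n) * z^n) \<le> 3 * (1/4)^n" .
  qed
  define a :: "nat \<Rightarrow> complex" where "a n = (if n = 0 then 0 else complex_of_real (b (n - 1)))" for n
  define F where "F = (\<lambda>z. z * bessel_struve_kernel \<nu> z)"
  have Fser: "(\<lambda>n. a n * z^n) sums F z" if z: "cmod z \<le> 2" for z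
  proof -
    have "(\<lambda>n. complex_of_real (b n) * z^n) sums bessel_struve_kernel \<nu> z"
      unfolding bessel_struve_kernel_def b_def[symmetric] using summ_b[OF z] by (rule summable_sums)
    then have "(\<lambda>n. z * (complex_of_real (b n) * z^n)) sums (z * bessel_struve_kernel \<nu> z)"
      by (rule sums_mult)
    moreover have "(\<lambda>n. a (Suc n) * z^(Suc n)) = (\<lambda>n. z * (complex_of_real (b n) * z^n))"
      unfolding a_def by (auto simp: algebra_simps)
    ultimately have "(\<lambda>n. a (Suc n) * z^(Suc n)) sums F z" unfolding F_def by simp
    then show ?thesis unfolding sums_Suc_iff[of "\<lambda>n. a n * z^n"] by (simp add: a_def)
  qed
  have da: "diffs a = (\<lambda>n. complex_of_real ((real n + 1) * b n))"
    unfolding diffs_def a_def by (auto simp: add_ac)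
  define D where "D z = (\<Sum>n. complex_of_real ((real n + 1) * b n) * z^n)" for z
  have Fder: "(F has_field_derivative D z) (at z)" if z: "cmod z < 2" for z
  proof -
    have s2: "summable (\<lambda>n. a n * (2::complex)^n)" using Fser[of 2] by (auto intro: sums_summable)
    have "((\<lambda>x. \<Sum>n. a n * x^n) has_field_derivative (\<Sum>n. diffs a n * z^n)) (at z)"
      by (rule termdiffs_strong[OF s2]) (use z in simp)
    then have "((\<lambda>x. \<Sum>n. a n * x^n) has_field_derivative D z) (at z)"
      unfolding da D_def .
    then show ?thesis
    proof (rule has_field_derivative_transform_within_open)
      show "open (ball (0::complex) 2)" by simp
      show "z \<in> ball 0 2" using z by simp
      fix x :: complex assume "x \<in> ball 0 2"
      then have "cmod x \<le> 2" by simp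
      then show "(\<Sum>n. a n * x^n) = F x" using Fser sums_unique by metis
    qed
  qed
  have derF: "deriv F z = D z" if "cmod z < 2" for z
    using Fder[OF that] by (rule DERIV_imp_deriv)
  have holF: "F holomorphic_on unit_disc"
    unfolding holomorphic_on_open[OF open_ball]
  proof
    fix x :: complex assume "x \<in> unit_disc"
    then have "cmod x < 2" by simp
    then show "\<exists>f'. (F has_field_derivative f') (at x)" using Fder by blast
  qed
  have D0: "D 0 = 1" unfolding D_def using b0 by simp
  have gder: "((\<lambda>z::complex. z / (1 - z\<^sup>2)) has_field_derivative 1) (at 0)"
    by (auto intro!: derivative_eq_intros)
  have main: "Re ((1 - z^2) * D z) > 0" if z: "cmod z < 1" for z
  proof -
    define R where "R = Re (1 - z^2)"
    have "Re (z^2) \<le> cmod (z^2)" by (rule complex_Re_le_cmod)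
    moreover have "cmod (z^2) < 1" using z by (simp add: norm_power power_less_one_iff)
    ultimately have R0: "R > 0" unfolding R_def by simp
    have s: "(\<lambda>n. (1 - z^2) * (complex_of_real ((real n + 1) * b n) * z^n)) sums ((1 - z^2) * D z)"
      unfolding D_def using summ_c[of z] z by (intro sums_mult summable_sums) simp
    have sR: "(\<lambda>n. Re ((1 - z^2) * (complex_of_real ((real n + 1) * b n) * z^n))) sums Re ((1 - z^2) * D z)"
      using sums_Re[OF s] .
    define e where "e n = (if n = 0 then R else - (12/5 * (1/4)^n * R))" for n :: nat
    have se: "e sums (R/5)"
    proof -
      have g: "(\<lambda>n. (1/4::real)^n) sums (4/3)" using geometric_sums[of "1/4::real"] by simp
      have "(\<lambda>n. (if n = 0 then 17/5 * R else 0) - (12/5 * R) * (1/4)^n) sums (17/5 * R - (12/5 * R) * (4/3))"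
        by (intro sums_diff sums_mult g) (use sums_single[of 0 "\<lambda>_. 17/5 * R"] in simp)
      moreover have "(\<lambda>n. (if n = 0 then 17/5 * R else 0) - (12/5 * R) * (1/4)^n) = e"
        unfolding e_def by (auto simp: fun_eq_iff)
      ultimately show ?thesis by simp
    qed
    have le: "e n \<le> Re ((1 - z^2) * (complex_of_real ((real n + 1) * b n) * z^n))" for n
    proof -
      have eq: "Re ((1 - z^2) * (complex_of_real ((real n + 1) * b n) * z^n)) = ((real n + 1) * b n) * Re (z^n * (1 - z^2))"
        by (simp add: algebra_simps)
      show ?thesis
      proof (cases "n = 0")
        case True then show ?thesis unfolding eq e_def R_def using b0 by simp
      next
        case False
        have ri: "Re (z^n * (1 - z^2)) \<ge> - (real n + 1) * R" unfolding R_def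
          using re_ineq[of z n] z by simp
        have "((real n + 1) * b n) * Re (z^n * (1 - z^2)) \<ge> ((real n + 1) * b n) * (- (real n + 1) * R)"
          using ri bpos[of n] by (intro mult_left_mono) auto
        moreover have "((real n + 1) * b n) * (- (real n + 1) * R) = - (((real n + 1)^2 * b n) * R)"
          by (simp add: power2_eq_square algebra_simps)
        moreover have "((real n + 1)^2 * b n) * R \<le> (12/5 * (1/4)^n) * R"
          using cb[of n] False R0 by (intro mult_right_mono) auto
        moreover have "e n = - (12/5 * (1/4)^n * R)" using False unfolding e_def by simp
        ultimately show ?thesis unfolding eq by linarith
      qed
    qed
    have "R/5 \<le> Re ((1 - z^2) * D z)" by (rule sums_le[OF le se sR])
    then show ?thesis using R0 by simp
  qed
  show ?thesis
    unfolding close_to_convex_wrt_def F_def[symmetric]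
  proof (intro conjI)
    show "starlike_fun (\<lambda>z. z / (1 - z\<^sup>2))" by (rule starlike_g)
    show "F holomorphic_on unit_disc" by (rule holF)
    show "F 0 = 0" unfolding F_def by simp
    show "deriv F 0 = 1" using derF[of 0] D0 by simp
    show "\<exists>\<beta>::real. \<forall>z\<in>unit_disc. 0 < Re (cis \<beta> * ctc_quotient F (\<lambda>z. z / (1 - z\<^sup>2)) z)"
    proof (intro exI[of _ 0] ballI)
      fix z :: complex assume "z \<in> unit_disc"
      then have z: "cmod z < 1" by simp
      show "0 < Re (cis 0 * ctc_quotient F (\<lambda>z. z / (1 - z\<^sup>2)) z)"
      proof (cases "z = 0")
        case True
        have "deriv (\<lambda>z::complex. z / (1 - z\<^sup>2)) 0 = 1" using gder by (rule DERIV_imp_deriv)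
        then show ?thesis using True derF[of 0] D0 unfolding ctc_quotient_def by simp
      next
        case False
        have nz: "1 - z^2 \<noteq> 0" using one_minus_sq_nz[OF z] .
        have "ctc_quotient F (\<lambda>z. z / (1 - z\<^sup>2)) z = (1 - z^2) * D z"
          unfolding ctc_quotient_def using False nz derF[of z] z by (simp add: field_simps)
        then show ?thesis using main[OF z] by simp
      qed
    qed
  qed
qed


end
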